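(* Let $\eta\in\mathbb{R}\setminus\{0\}$ and let $\varepsilon',\ell,m,M>0$. There exists $\xi_0=\xi_0(|\eta|,\varepsilon',\ell,m,M)\in\mathbb{N}^*$ with the following property. Let $X\subseteq\mathbb{R}^2$ be non-empty, let $\varepsilon>0$, and let $\gamma=\bigcup_{i\in S}I_i$ be a union of segments in $\mathbb{R}^2$ such that $\gamma$ is $\varepsilon$-dense in $X$, every $I_i$ has slope of absolute value less than $M$, and every $I_i$ has length greater than $\ell$. Then for every integer $\xi\ge\xi_0$ there is a subset $\gamma'\subseteq J_{\eta,\xi}(\gamma)$ which is a union of segments, is $(\varepsilon+\varepsilon')$-dense in $\mathrm{Str}(X,(0,\eta))$, whose segments all have slopes of absolute value greater than $m$, and whose segments all have length greater than $|\eta|$.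
   Context: For $X,Y\subseteq\mathbb{R}^2$ and $\varepsilon>0$, $X$ is $\varepsilon$-dense in $Y$ if $Y\subseteq B_\varepsilon(X)$, the open $\varepsilon$-neighbourhood of $X$. For $v\in\mathbb{R}^2\setminus\{0\}$, $\mathrm{Str}(X,v)=X+[-v,v]$ (Minkowski sum with the segment from $-v$ to $v$). For $\xi\in\mathbb{N}^*$, $\phi_\xi:\mathbb{R}\to[-1,1]$ is the triangle wave $\phi_\xi(x)=(-1)^{z+1}(4\xi x-2z-1)$ for $z\in\mathbb{Z}$, $x\in[\frac{z}{2\xi},\frac{z+1}{2\xi})$, and for $\eta\ne0$, $J_{\eta,\xi}(x,y)=(x,y+\eta\phi_\xi(x))$, a homeomorphism of $\mathbb{R}^2$. *)

theory Defs
  imports "HOL-Analysis.Analysis"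
begin

type_synonym pt = "real \<times> real"

definition eps_dense :: "real \<Rightarrow> pt set \<Rightarrow> pt set \<Rightarrow> bool" where
  "eps_dense e X Y \<longleftrightarrow> Y \<subseteq> (\<Union>x\<in>X. ball x e)"

definition Str :: "pt set \<Rightarrow> pt \<Rightarrow> pt set" where
  "Str X v = {x + t *\<^sub>R v | x t. x \<in> X \<and> t \<in> {-1..1}}"

definition tri_wave :: "nat \<Rightarrow> real \<Rightarrow> real" where
  "tri_wave \<xi> x = (let z = \<lfloor>2 * real \<xi> * x\<rfloor> in
      (-1) ^ nat (\<bar>z + 1\<bar>) * (4 * real \<xi> * x - 2 * of_int z - 1))"

definition J :: "real \<Rightarrow> nat \<Rightarrow> pt \<Rightarrow> pt" where
  "J \<eta> \<xi> p = (fst p, snd p + \<eta> * tri_wave \<xi> (fst p))"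

definition seg_union :: "(pt \<times> pt) set \<Rightarrow> pt set" where
  "seg_union \<Gamma> = (\<Union>(a, b)\<in>\<Gamma>. closed_segment a b)"

text \<open>Segment [a,b] has slope of absolute value less than M (vertical segments: infinite slope).\<close>
definition slope_lt :: "real \<Rightarrow> pt \<times> pt \<Rightarrow> bool" where
  "slope_lt M s \<longleftrightarrow> (case s of (a, b) \<Rightarrow>
      fst a \<noteq> fst b \<and> \<bar>(snd b - snd a) / (fst b - fst a)\<bar> < M)"

text \<open>Segment [a,b] has slope of absolute value greater than m (vertical segments count).\<close>
definition slope_gt :: "real \<Rightarrow> pt \<times> pt \<Rightarrow> bool" where
  "slope_gt m s \<longleftrightarrow> (case s of (a, b) \<Rightarrow>
      fst a = fst b \<or> \<bar>(snd b - snd a) / (fst b - fst a)\<bar> > m)"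

definition seg_len :: "pt \<times> pt \<Rightarrow> real" where
  "seg_len s = (case s of (a, b) \<Rightarrow> dist a b)"

end

theory Submission
  imports Defs
begin

lemma sgp: "(-1::real)^nat \<bar>k\<bar> = (if even k then 1 else -1)"
  by (simp add: even_nat_iff)

lemma dist_pair_le: "dist ((x1::real),(y1::real)) (x2,y2) \<le> \<bar>x1-x2\<bar> + \<bar>y1-y2\<bar>"
  unfolding dist_Pair_Pair dist_real_def using sqrt_sum_squares_le_sum_abs by simp

lemma dist_pair_ge: "\<bar>y1-y2\<bar> \<le> dist ((x1::real),(y1::real)) (x2,y2)"
proof -
  have "sqrt ((y1-y2)^2) \<le> sqrt ((x1-x2)^2 + (y1-y2)^2)"
    by (rule real_sqrt_le_mono) simp
  then show ?thesis unfolding dist_Pair_Pair dist_real_def by simp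
qed

lemma tri_piece:
  assumes "\<xi> \<ge> 1" "real_of_int z / (2*real \<xi>) \<le> x" "x \<le> (real_of_int z+1)/(2*real \<xi>)"
  shows "tri_wave \<xi> x = (if even (z+1) then 1 else -1) * (4*real \<xi>*x - 2*z - 1)"
proof (cases "x < (real_of_int z+1)/(2*real \<xi>)")
  case True
  have p: "real \<xi> > 0" using assms by simp
  have "z \<le> 2*real \<xi>*x" using assms(2) p by (simp add: field_simps)
  moreover have "2*real \<xi>*x < z+1" using True p by (simp add: field_simps)
  ultimately have "\<lfloor>2 * real \<xi> * x\<rfloor> = z" by (simp add: floor_eq_iff)
  then show ?thesis unfolding tri_wave_def Let_def sgp by simp
next
  case False
  have p: "real \<xi> > 0" using assms by simp
  have x: "2*real \<xi>*x = z+1" using False assms(3) p by (simp add: field_simps)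
  have "\<lfloor>2 * real \<xi> * x\<rfloor> = z+1" using x by simp
  then show ?thesis unfolding tri_wave_def Let_def sgp using x
    by (auto simp: algebra_simps)
qed

definition sl :: "pt \<times> pt \<Rightarrow> real" where
  "sl s = (snd (snd s) - snd (fst s)) / (fst (snd s) - fst (fst s))"

definition Pt :: "pt \<times> pt \<Rightarrow> real \<Rightarrow> pt" where
  "Pt s x = (x, snd (fst s) + (x - fst (fst s)) * sl s)"

lemma Pt_seg:
  assumes "fst a \<noteq> fst b" "min (fst a) (fst b) \<le> x" "x \<le> max (fst a) (fst b)"
  shows "Pt (a,b) x \<in> closed_segment a b"
proof -
  define u where "u = (x - fst a) / (fst b - fst a)"
  have d: "fst b - fst a \<noteq> 0" using assms by simp
  have u01: "0 \<le> u \<and> u \<le> 1"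
  proof (cases "fst a < fst b")
    case True
    then show ?thesis using assms unfolding u_def by (simp add: divide_simps)
  next
    case False
    then have "fst b < fst a" using assms by simp
    then show ?thesis using assms unfolding u_def by (simp add: divide_simps)
  qed
  have e1: "u * (fst b - fst a) = x - fst a" using d unfolding u_def by simp
  have e2: "(x - fst a) * ((snd b - snd a) / (fst b - fst a)) = u * (snd b - snd a)"
    using d unfolding u_def by simp
  have "Pt (a,b) x = (1 - u) *\<^sub>R a + u *\<^sub>R b"
    unfolding Pt_def sl_def using e1 e2 by (simp add: prod_eq_iff algebra_simps)
  then show ?thesis unfolding closed_segment_def using u01 by blast
qed

lemma seg_Pt:
  assumes "fst a \<noteq> fst b" "q \<in> closed_segment a b"
  shows "q = Pt (a,b) (fst q) \<and> min (fst a) (fst b) \<le> fst q \<and> fst q \<le> max (fst a) (fst b)"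
proof -
  obtain u where u: "0 \<le> u" "u \<le> 1" "q = (1 - u) *\<^sub>R a + u *\<^sub>R b"
    using assms(2) unfolding closed_segment_def by blast
  have d: "fst b - fst a \<noteq> 0" using assms by simp
  have f0: "fst q = (1-u) * fst a + u * fst b" using u(3) by simp
  have f: "fst q = fst a + u * (fst b - fst a)" using f0 by (simp add: algebra_simps)
  have uq: "(fst q - fst a) / (fst b - fst a) = u" using f d by simp
  have s0: "snd q = (1-u) * snd a + u * snd b" using u(3) by simp
  have s1: "(fst q - fst a) * ((snd b - snd a) / (fst b - fst a)) = ((fst q - fst a) / (fst b - fst a)) * (snd b - snd a)"
    by simp
  have "snd q = snd a + (fst q - fst a) * ((snd b - snd a) / (fst b - fst a))"
    unfolding s1 uq s0 by (simp add: algebra_simps)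
  then have "q = Pt (a,b) (fst q)" unfolding Pt_def sl_def by (simp add: prod_eq_iff)
  moreover have "min (fst a) (fst b) \<le> fst q \<and> fst q \<le> max (fst a) (fst b)"
  proof (cases "fst a \<le> fst b")
    case True
    have A: "0 \<le> u*(fst b - fst a)" using u True by simp
    have B: "u*(fst b - fst a) \<le> fst b - fst a" using mult_right_mono[of u 1 "fst b - fst a"] u True by simp
    have "fst a \<le> fst q" "fst q \<le> fst b" using f A B by linarith+
    then show ?thesis using True by (simp add: min_def max_def)
  next
    case False
    have A: "0 \<le> u*(fst a - fst b)" using u False by simp
    have B: "u*(fst a - fst b) \<le> fst a - fst b" using mult_right_mono[of u 1 "fst a - fst b"] u False by simp
    have f': "fst q = fst a - u*(fst a - fst b)" using f by (simp add: algebra_simps)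
    have "fst b \<le> fst q" "fst q \<le> fst a" using f' A B by linarith+
    then show ?thesis using False by (simp add: min_def max_def)
  qed
  ultimately show ?thesis by blast
qed

lemma Pt_dist: "dist (Pt s x) (Pt s y) \<le> \<bar>x - y\<bar> * (1 + \<bar>sl s\<bar>)"
proof -
  have "dist (Pt s x) (Pt s y) \<le> \<bar>x - y\<bar> + \<bar>(x - fst (fst s)) * sl s - (y - fst (fst s)) * sl s\<bar>"
    unfolding Pt_def using dist_pair_le by (metis add_diff_cancel_left)
  moreover have "(x - fst (fst s)) * sl s - (y - fst (fst s)) * sl s = (x - y) * sl s"
    by (simp add: algebra_simps)
  moreover have "\<bar>x - y\<bar> + \<bar>(x - y) * sl s\<bar> = \<bar>x - y\<bar> * (1 + \<bar>sl s\<bar>)"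
    by (simp add: abs_mult distrib_left)
  ultimately show ?thesis by simp
qed

lemma width:
  assumes "slope_lt M (a,b)" "seg_len (a,b) > l"
  shows "l < \<bar>fst b - fst a\<bar> * (1 + M)"
proof -
  have d: "fst a \<noteq> fst b" and k: "\<bar>sl (a,b)\<bar> < M" using assms(1) unfolding slope_lt_def sl_def by auto
  have e: "snd b - snd a = (fst b - fst a) * sl (a,b)" using d unfolding sl_def by simp
  have "dist a b \<le> \<bar>fst a - fst b\<bar> + \<bar>snd a - snd b\<bar>"
    using dist_pair_le[of "fst a" "snd a" "fst b" "snd b"] by simp
  also have "\<bar>snd a - snd b\<bar> = \<bar>fst b - fst a\<bar> * \<bar>sl (a,b)\<bar>"
    using e by (metis abs_minus_commute abs_mult)
  also have "\<bar>fst a - fst b\<bar> + \<bar>fst b - fst a\<bar> * \<bar>sl (a,b)\<bar> \<le> \<bar>fst b - fst a\<bar> * (1 + M)"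
    using mult_right_mono[of "\<bar>sl (a,b)\<bar>" M "\<bar>fst b - fst a\<bar>"] k
    by (simp add: abs_minus_commute algebra_simps)
  finally show ?thesis using assms(2) unfolding seg_len_def by simp
qed

lemma J_Pt: "J \<eta> \<xi> (Pt s x) = (x, snd (Pt s x) + \<eta> * tri_wave \<xi> x)"
  unfolding J_def Pt_def by simp

lemma piece_comb:
  fixes z :: int and \<xi> :: nat and tt :: real
  assumes "\<xi> \<ge> 1" "0 \<le> tt" "tt \<le> 1"
  defines "u \<equiv> real_of_int z / (2*real \<xi>)" and "w \<equiv> (real_of_int z + 1) / (2*real \<xi>)"
  shows "(1-tt) *\<^sub>R J \<eta> \<xi> (Pt s u) + tt *\<^sub>R J \<eta> \<xi> (Pt s w) = J \<eta> \<xi> (Pt s ((1-tt)*u + tt * w))"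
proof -
  define x where "x = (1-tt)*u + tt * w"
  have p: "real \<xi> > 0" using assms by simp
  have uv: "u \<le> w" unfolding u_def w_def using p by (simp add: divide_right_mono)
  have x1: "x = u + tt*(w-u)" unfolding x_def by (simp add: algebra_simps)
  have x2: "x = w - (1-tt)*(w-u)" unfolding x_def by (simp add: algebra_simps)
  have "0 \<le> tt*(w-u)" using uv assms(2) by simp
  then have xu: "u \<le> x" using x1 by linarith
  have "0 \<le> (1-tt)*(w-u)" using uv assms(3) by simp
  then have xv: "x \<le> w" using x2 by linarith
  define \<sigma> where "\<sigma> = (if even (z+1) then 1 else -1::real)"
  have tu: "tri_wave \<xi> u = \<sigma> * (4*real \<xi>*u - 2*z - 1)"
    using tri_piece[OF assms(1), of z u] uv unfolding \<sigma>_def u_def w_def by simp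
  have tv: "tri_wave \<xi> w = \<sigma> * (4*real \<xi>*w - 2*z - 1)"
    using tri_piece[OF assms(1), of z w] uv unfolding \<sigma>_def u_def w_def by simp
  have tx: "tri_wave \<xi> x = \<sigma> * (4*real \<xi>*x - 2*z - 1)"
    using tri_piece[OF assms(1), of z x] xu xv unfolding \<sigma>_def u_def w_def by simp
  define A where "A = snd (fst s)"
  define a1 where "a1 = fst (fst s)"
  define k where "k = sl s"
  have PJ: "J \<eta> \<xi> (Pt s y) = (y, A + (y - a1) * k + \<eta> * tri_wave \<xi> y)" for y
    unfolding J_def Pt_def A_def a1_def k_def by simp
  have e: "(1-tt) * (A + (u - a1) * k + \<eta> * (\<sigma> * (4*real \<xi>*u - 2*z - 1)))
     + tt * (A + (w - a1) * k + \<eta> * (\<sigma> * (4*real \<xi>*w - 2*z - 1)))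
     = A + (x - a1) * k + \<eta> * (\<sigma> * (4*real \<xi>*x - 2*z - 1))"
    unfolding x_def by (simp add: algebra_simps)
  show ?thesis unfolding x_def[symmetric] PJ tu tv tx using e x_def
    by (simp add: prod_eq_iff)
qed

lemma choose_z:
  fixes h lo hi q :: real
  assumes "h > 0" "lo \<le> q" "q \<le> hi" "3*h \<le> hi - lo"
  shows "\<exists>z::int. lo \<le> real_of_int z*h \<and> (real_of_int z+1)*h \<le> hi \<and> q - 2*h \<le> real_of_int z*h \<and> (real_of_int z+1)*h \<le> q + 2*h"
proof -
  define c where "c = \<lceil>q/h\<rceil>"
  have c0: "q/h \<le> c" "c - 1 < q/h" unfolding c_def using ceiling_correct by auto
  have c1: "q \<le> c*h" using c0(1) assms(1) by (simp add: pos_divide_le_eq)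
  have "c*h < (1 + q/h)*h" using mult_strict_right_mono[OF _ assms(1)] c0(2) by simp
  then have c2: "c*h < q + h" using assms(1) by (simp add: algebra_simps)
  show ?thesis
  proof (cases "(c+1)*h \<le> hi")
    case True
    then show ?thesis using c1 c2 assms by (intro exI[of _ c]) (auto simp: algebra_simps)
  next
    case False
    then show ?thesis using c1 c2 assms by (intro exI[of _ "c-2"]) (auto simp: algebra_simps)
  qed
qed

lemma conv_between:
  fixes u w t :: real
  assumes "u \<le> w" "0 \<le> t" "t \<le> 1"
  shows "u \<le> (1-t)*u + t*w \<and> (1-t)*u + t*w \<le> w"
proof -
  have x1: "(1-t)*u + t*w = u + t*(w-u)" by (simp add: algebra_simps)
  have x2: "(1-t)*u + t*w = w - (1-t)*(w-u)" by (simp add: algebra_simps)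
  have "0 \<le> t*(w-u)" "0 \<le> (1-t)*(w-u)" using assms by simp_all
  then show ?thesis using x1 x2 by linarith
qed

lemma piece_props:
  fixes z :: int and \<xi> :: nat
  assumes "\<xi> \<ge> 1" "\<bar>sl s\<bar> < M" "4*real \<xi>*\<bar>\<eta>\<bar> > m + M" "M/(2*real \<xi>) \<le> \<bar>\<eta>\<bar>"
  defines "u \<equiv> real_of_int z / (2*real \<xi>)" and "w \<equiv> (real_of_int z + 1) / (2*real \<xi>)"
  shows "slope_gt m (J \<eta> \<xi> (Pt s u), J \<eta> \<xi> (Pt s w)) \<and> seg_len (J \<eta> \<xi> (Pt s u), J \<eta> \<xi> (Pt s w)) > \<bar>\<eta>\<bar>"
proof -
  have p: "real \<xi> > 0" using assms by simp
  have uw: "u \<le> w" unfolding u_def w_def using p by (simp add: divide_right_mono)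
  define \<sigma> where "\<sigma> = (if even (z+1) then 1 else -1::real)"
  have sa: "\<bar>\<sigma>\<bar> = 1" unfolding \<sigma>_def by simp
  have tu: "tri_wave \<xi> u = \<sigma> * (4*real \<xi>*u - 2*z - 1)"
    using tri_piece[OF assms(1), of z u] uw unfolding \<sigma>_def u_def w_def by simp
  have tw: "tri_wave \<xi> w = \<sigma> * (4*real \<xi>*w - 2*z - 1)"
    using tri_piece[OF assms(1), of z w] uw unfolding \<sigma>_def u_def w_def by simp
  have "4*real \<xi>*u = 2*z" unfolding u_def using p by simp
  then have eu: "4*real \<xi>*u - 2*z - 1 = -1" by linarith
  have tu': "tri_wave \<xi> u = - \<sigma>" unfolding tu eu by simp
  have "4*real \<xi>*w = 2*z + 2" unfolding w_def using p by (simp add: field_simps)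
  then have ew: "4*real \<xi>*w - 2*z - 1 = 1" by linarith
  have tw': "tri_wave \<xi> w = \<sigma>" unfolding tw ew by simp
  define k where "k = sl s"
  have hw: "w - u = 1/(2*real \<xi>)" unfolding u_def w_def by (simp add: add_divide_distrib)
  have PJ: "J \<eta> \<xi> (Pt s y) = (y, snd (fst s) + (y - fst (fst s)) * k + \<eta> * tri_wave \<xi> y)" for y
    unfolding J_def Pt_def k_def by simp
  define dy where "dy = (snd (fst s) + (w - fst (fst s)) * k + \<eta> * \<sigma>) - (snd (fst s) + (u - fst (fst s)) * k + \<eta> * (-\<sigma>))"
  have dy: "dy = k/(2*real \<xi>) + 2*\<eta>*\<sigma>" unfolding dy_def using hw
    by (simp add: algebra_simps)
  have ne: "u \<noteq> w" using hw p by auto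
  have sl_eq: "dy / (w - u) = k + 4*real \<xi>*\<eta>*\<sigma>" unfolding dy hw using p
    by (simp add: field_simps)
  have "\<bar>4*real \<xi>*\<eta>*\<sigma>\<bar> = 4*real \<xi>*\<bar>\<eta>\<bar>" using sa p by (simp add: abs_mult)
  then have "\<bar>k + 4*real \<xi>*\<eta>*\<sigma>\<bar> > m" using assms(2,3) unfolding k_def by linarith
  then have e: "\<bar>(snd (J \<eta> \<xi> (Pt s w)) - snd (J \<eta> \<xi> (Pt s u))) / (fst (J \<eta> \<xi> (Pt s w)) - fst (J \<eta> \<xi> (Pt s u)))\<bar> > m"
    unfolding PJ tu' tw' fst_conv snd_conv dy_def[symmetric] sl_eq .
  have A: "slope_gt m (J \<eta> \<xi> (Pt s u), J \<eta> \<xi> (Pt s w))"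
    unfolding slope_gt_def using e by simp
  have "\<bar>2*\<eta>*\<sigma>\<bar> = 2*\<bar>\<eta>\<bar>" using sa by (simp add: abs_mult)
  moreover have "\<bar>k/(2*real \<xi>)\<bar> < M/(2*real \<xi>)" using assms(2) p unfolding k_def
    by (simp add: divide_strict_right_mono)
  ultimately have "\<bar>dy\<bar> > \<bar>\<eta>\<bar>" unfolding dy using assms(4) by linarith
  moreover have "\<bar>dy\<bar> \<le> seg_len (J \<eta> \<xi> (Pt s u), J \<eta> \<xi> (Pt s w))"
    unfolding seg_len_def PJ tu' tw' dy_def
    using dist_pair_ge by (metis abs_minus_commute case_prod_conv)
  ultimately show ?thesis using A by linarith
qed

theorem mainTheorem11:
  fixes \<eta> e' l m M :: real
  assumes "\<eta> \<noteq> 0" and "e' > 0" and "l > 0" and "m > 0" and "M > 0"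
  shows "\<exists>\<xi>\<^sub>0::nat. \<xi>\<^sub>0 \<ge> 1 \<and>
    (\<forall>(X::pt set) (e::real) (\<Gamma>::(pt \<times> pt) set).
       X \<noteq> {} \<and> e > 0 \<and> eps_dense e (seg_union \<Gamma>) X \<and>
       (\<forall>s\<in>\<Gamma>. slope_lt M s \<and> seg_len s > l) \<longrightarrow>
       (\<forall>\<xi>::nat. \<xi> \<ge> \<xi>\<^sub>0 \<longrightarrow>
          (\<exists>\<Gamma>'::(pt \<times> pt) set.
             seg_union \<Gamma>' \<subseteq> J \<eta> \<xi> ` seg_union \<Gamma> \<and>
             eps_dense (e + e') (seg_union \<Gamma>') (Str X (0, \<eta>)) \<and>
             (\<forall>s\<in>\<Gamma>'. slope_gt m s \<and> seg_len s > \<bar>\<eta>\<bar>))))"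
proof -
  have ea: "\<bar>\<eta>\<bar> > 0" using assms(1) by simp
  define C1 where "C1 = 3*(1+M)/l"
  define C2 where "C2 = (1+M)/e'"
  define C3 where "C3 = (m+M)/\<bar>\<eta>\<bar>"
  define C4 where "C4 = M/\<bar>\<eta>\<bar>"
  have pos: "C1 > 0" "C2 > 0" "C3 > 0" "C4 > 0"
    unfolding C1_def C2_def C3_def C4_def using assms ea by simp_all
  define C where "C = C1 + C2 + C3 + C4"
  define \<xi>0 where "\<xi>0 = nat \<lceil>C\<rceil> + 1"
  show ?thesis
  proof (rule exI[of _ \<xi>0], intro conjI allI impI)
    show "1 \<le> \<xi>0" unfolding \<xi>0_def by simp
  next
    fix X :: "pt set" and e :: real and \<Gamma> :: "(pt \<times> pt) set" and \<xi> :: nat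
    assume H: "X \<noteq> {} \<and> e > 0 \<and> eps_dense e (seg_union \<Gamma>) X \<and> (\<forall>s\<in>\<Gamma>. slope_lt M s \<and> seg_len s > l)"
      and xi: "\<xi>0 \<le> \<xi>"
    have HG: "\<And>s. s \<in> \<Gamma> \<Longrightarrow> slope_lt M s \<and> seg_len s > l" using H by blast
    have "real \<xi> \<ge> real (nat \<lceil>C\<rceil>) + 1" using xi unfolding \<xi>0_def by simp
    moreover have "real (nat \<lceil>C\<rceil>) \<ge> C" by linarith
    ultimately have xiC: "real \<xi> > C" by linarith
    have p: "real \<xi> > 0" using xiC pos unfolding C_def by linarith
    have xi1: "\<xi> \<ge> 1" using p by simp
    define h where "h = 1/(2*real \<xi>)"
    have hpos: "h > 0" unfolding h_def using p by simp
    have "C1 < real \<xi>" using xiC pos unfolding C_def by linarith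
    then have "3*(1+M) < l * real \<xi>" unfolding C1_def using assms(3) by (simp add: pos_divide_less_eq mult.commute)
    moreover have "l*(2*real \<xi>) = 2*(l*real \<xi>)" by simp
    ultimately have "3*(1+M) < l*(2*real \<xi>)" using mult_pos_pos[OF assms(3) p] by linarith
    moreover have "3*h*(1+M) = 3*(1+M)/(2*real \<xi>)" unfolding h_def by simp
    ultimately have c1: "3*h*(1+M) < l" using p by (simp add: pos_divide_less_eq)
    have "C2 < real \<xi>" using xiC pos unfolding C_def by linarith
    then have "(1+M) < e' * real \<xi>" unfolding C2_def using assms(2) by (simp add: pos_divide_less_eq mult.commute)
    then have c2: "2*h*(1+M) < e'" unfolding h_def using p assms(2) by (simp add: field_simps)
    have "C3 < real \<xi>" using xiC pos unfolding C_def by linarith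
    then have "m + M < real \<xi> * \<bar>\<eta>\<bar>" unfolding C3_def using ea by (simp add: pos_divide_less_eq)
    moreover have "4*real \<xi>*\<bar>\<eta>\<bar> = 4*(real \<xi>*\<bar>\<eta>\<bar>)" by simp
    ultimately have c3: "4*real \<xi>*\<bar>\<eta>\<bar> > m + M" using mult_pos_pos[OF p ea] by linarith
    have "C4 < real \<xi>" using xiC pos unfolding C_def by linarith
    then have "M < real \<xi> * \<bar>\<eta>\<bar>" unfolding C4_def using ea by (simp add: pos_divide_less_eq)
    moreover have "\<bar>\<eta>\<bar>*(2*real \<xi>) = 2*(real \<xi>*\<bar>\<eta>\<bar>)" by simp
    ultimately have "M \<le> \<bar>\<eta>\<bar>*(2*real \<xi>)" using mult_pos_pos[OF p ea] by linarith
    then have c4: "M/(2*real \<xi>) \<le> \<bar>\<eta>\<bar>" using p by (simp add: pos_divide_le_eq)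
    define lo where "lo = (\<lambda>s::pt\<times>pt. min (fst (fst s)) (fst (snd s)))"
    define hi where "hi = (\<lambda>s::pt\<times>pt. max (fst (fst s)) (fst (snd s)))"
    define G where "G = {(J \<eta> \<xi> (Pt s (real_of_int z / (2*real \<xi>))), J \<eta> \<xi> (Pt s ((real_of_int z + 1) / (2*real \<xi>)))) | s z.
       s \<in> \<Gamma> \<and> lo s \<le> real_of_int z / (2*real \<xi>) \<and> (real_of_int z + 1) / (2*real \<xi>) \<le> hi s}"
    show "\<exists>\<Gamma>'. seg_union \<Gamma>' \<subseteq> J \<eta> \<xi> ` seg_union \<Gamma> \<and>
             eps_dense (e + e') (seg_union \<Gamma>') (Str X (0, \<eta>)) \<and>
             (\<forall>s\<in>\<Gamma>'. slope_gt m s \<and> seg_len s > \<bar>\<eta>\<bar>)"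
    proof (intro exI[of _ G] conjI)
      show "seg_union G \<subseteq> J \<eta> \<xi> ` seg_union \<Gamma>"
      proof
        fix p assume "p \<in> seg_union G"
        then obtain s and z :: int where s: "s \<in> \<Gamma>" "lo s \<le> real_of_int z / (2*real \<xi>)"
          "(real_of_int z + 1) / (2*real \<xi>) \<le> hi s"
          and pin: "p \<in> closed_segment (J \<eta> \<xi> (Pt s (real_of_int z / (2*real \<xi>)))) (J \<eta> \<xi> (Pt s ((real_of_int z + 1) / (2*real \<xi>))))"
          unfolding seg_union_def G_def by auto
        define u where "u = real_of_int z / (2*real \<xi>)"
        define w where "w = (real_of_int z + 1) / (2*real \<xi>)"
        have uw: "u \<le> w" unfolding u_def w_def using p by (simp add: divide_right_mono)
        obtain tt where tt: "0 \<le> tt" "tt \<le> 1" "p = (1-tt) *\<^sub>R J \<eta> \<xi> (Pt s u) + tt *\<^sub>R J \<eta> \<xi> (Pt s w)"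
          using pin unfolding closed_segment_def u_def w_def by blast
        have pe: "p = J \<eta> \<xi> (Pt s ((1-tt)*u + tt*w))"
          using tt piece_comb[OF xi1 tt(1) tt(2), where z=z and s=s and \<eta>=\<eta>] unfolding u_def w_def by simp
        have cb: "u \<le> (1-tt)*u + tt*w \<and> (1-tt)*u + tt*w \<le> w" using conv_between[OF uw tt(1,2)] .
        obtain a b where ab: "s = (a,b)" by (cases s)
        have d: "fst a \<noteq> fst b" using HG[OF s(1)] unfolding ab slope_lt_def by simp
        have "Pt (a,b) ((1-tt)*u + tt*w) \<in> closed_segment a b"
          apply (rule Pt_seg[OF d])
          using cb s(2,3) unfolding lo_def hi_def ab u_def w_def by auto
        then have "Pt s ((1-tt)*u + tt*w) \<in> seg_union \<Gamma>"
          unfolding seg_union_def using s(1) ab by blast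
        then show "p \<in> J \<eta> \<xi> ` seg_union \<Gamma>" using pe by blast
      qed
    next
      show "eps_dense (e + e') (seg_union G) (Str X (0, \<eta>))"
        unfolding eps_dense_def
      proof
        fix p assume "p \<in> Str X (0, \<eta>)"
        then obtain x t where xt: "p = x + t *\<^sub>R (0,\<eta>)" "x \<in> X" "-1 \<le> t" "t \<le> 1"
          unfolding Str_def by auto
        have "x \<in> (\<Union>q\<in>seg_union \<Gamma>. ball q e)" using H xt(2) unfolding eps_dense_def by blast
        then obtain q where q: "q \<in> seg_union \<Gamma>" "dist q x < e" by auto
        then obtain a b where ab: "(a,b) \<in> \<Gamma>" "q \<in> closed_segment a b" unfolding seg_union_def by auto
        have sab: "slope_lt M (a,b)" "seg_len (a,b) > l" using HG[OF ab(1)] by auto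
        have d: "fst a \<noteq> fst b" using sab(1) unfolding slope_lt_def by simp
        have k: "\<bar>sl (a,b)\<bar> < M" using sab(1) unfolding slope_lt_def sl_def by simp
        have wd: "l < \<bar>fst b - fst a\<bar> * (1+M)" using width[OF sab] .
        have sq: "q = Pt (a,b) (fst q)" "lo (a,b) \<le> fst q" "fst q \<le> hi (a,b)"
          using seg_Pt[OF d ab(2)] unfolding lo_def hi_def by auto
        have hl: "hi (a,b) - lo (a,b) = \<bar>fst b - fst a\<bar>" unfolding lo_def hi_def by (simp add: min_def max_def)
        have "3*h*(1+M) < \<bar>fst b - fst a\<bar>*(1+M)" using c1 wd by linarith
        then have "3*h < \<bar>fst b - fst a\<bar>" using mult_right_less_imp_less[of "3*h" "1+M" "\<bar>fst b - fst a\<bar>"] assms(5) by linarith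
        then have h3: "3*h \<le> hi (a,b) - lo (a,b)" using hl by simp
        from choose_z[OF hpos sq(2) sq(3) h3] obtain z :: int where zz: "lo (a,b) \<le> real_of_int z*h \<and> (real_of_int z+1)*h \<le> hi (a,b) \<and>
            fst q - 2*h \<le> real_of_int z*h \<and> (real_of_int z+1)*h \<le> fst q + 2*h" ..
        have z: "lo (a,b) \<le> real_of_int z*h" "(real_of_int z+1)*h \<le> hi (a,b)"
            "fst q - 2*h \<le> real_of_int z*h" "(real_of_int z+1)*h \<le> fst q + 2*h" using zz by auto
        define u where "u = real_of_int z / (2*real \<xi>)"
        define w where "w = (real_of_int z + 1) / (2*real \<xi>)"
        have zu: "real_of_int z * h = u" "(real_of_int z + 1)*h = w" unfolding h_def u_def w_def by simp_all
        define \<sigma> where "\<sigma> = (if even (z+1) then 1 else -1::real)"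
        have s2: "\<sigma>*\<sigma> = 1" unfolding \<sigma>_def by simp
        have sa: "\<bar>\<sigma>*t\<bar> \<le> 1" unfolding \<sigma>_def using xt(3,4) by (simp add: abs_le_iff)
        define tt where "tt = (1 + \<sigma>*t)/2"
        have tt01: "0 \<le> tt" "tt \<le> 1" unfolding tt_def using sa by (auto simp: abs_le_iff)
        define x' where "x' = (1-tt)*u + tt*w"
        define r where "r = (1-tt) *\<^sub>R J \<eta> \<xi> (Pt (a,b) u) + tt *\<^sub>R J \<eta> \<xi> (Pt (a,b) w)"
        have lw: "lo (a,b) \<le> u" "w \<le> hi (a,b)" using z(1,2) zu by simp_all
        have inG: "(J \<eta> \<xi> (Pt (a,b) u), J \<eta> \<xi> (Pt (a,b) w)) \<in> G"
          unfolding G_def apply (rule CollectI) apply (rule exI[of _ "(a,b)"]) apply (rule exI[of _ z])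
          using ab(1) lw unfolding u_def w_def by simp
        have "r \<in> closed_segment (J \<eta> \<xi> (Pt (a,b) u)) (J \<eta> \<xi> (Pt (a,b) w))"
          unfolding closed_segment_def r_def using tt01 by blast
        then have rG: "r \<in> seg_union G" unfolding seg_union_def using inG by blast
        have r_eq: "r = J \<eta> \<xi> (Pt (a,b) x')"
          unfolding r_def x'_def u_def w_def using piece_comb[OF xi1 tt01, where z=z and s="(a,b)" and \<eta>=\<eta>] by simp
        have uw: "u \<le> w" unfolding u_def w_def using p by (simp add: divide_right_mono)
        have cb: "u \<le> x' \<and> x' \<le> w" unfolding x'_def using conv_between[OF uw tt01] .
        have e1: "4*real \<xi>*u = 2*z" unfolding u_def using p by simp
        have e2: "4*real \<xi>*(w-u) = 2" unfolding u_def w_def using p by (simp add: field_simps)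
        have x1: "x' = u + tt*(w-u)" unfolding x'_def by (simp add: algebra_simps)
        have "4*real \<xi>*x' = 4*real \<xi>*u + tt*(4*real \<xi>*(w-u))" unfolding x1 by (simp add: algebra_simps)
        then have "4*real \<xi>*x' = 2*z + 2*tt" using e1 e2 by simp
        moreover have "2*tt - 1 = \<sigma>*t" unfolding tt_def by (simp add: field_simps)
        ultimately have e3: "4*real \<xi>*x' - 2*z - 1 = \<sigma>*t" by linarith
        have "tri_wave \<xi> x' = \<sigma> * (4*real \<xi>*x' - 2*z - 1)"
          using tri_piece[OF xi1, of z x'] cb unfolding \<sigma>_def u_def w_def by simp
        then have tri: "tri_wave \<xi> x' = t" unfolding e3 using s2 by (simp add: mult.assoc[symmetric])
        have "r - p = Pt (a,b) x' - x"
          unfolding r_eq xt(1) J_def by (simp add: Pt_def prod_eq_iff algebra_simps tri)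
        then have rp: "dist r p = dist (Pt (a,b) x') x" by (simp add: dist_norm)
        have "\<bar>x' - fst q\<bar> \<le> 2*h" unfolding abs_le_iff using cb z(3) z(4) zu by linarith
        moreover have "0 \<le> 1 + \<bar>sl (a,b)\<bar>" by simp
        ultimately have "\<bar>x' - fst q\<bar> * (1 + \<bar>sl (a,b)\<bar>) \<le> 2*h * (1 + M)"
          using k hpos by (intro mult_mono) auto
        then have "dist (Pt (a,b) x') q \<le> 2*h*(1+M)"
          using Pt_dist[of "(a,b)" x' "fst q"] sq(1) by simp
        moreover have "dist (Pt (a,b) x') x \<le> dist (Pt (a,b) x') q + dist q x" by (rule dist_triangle)
        ultimately have "dist r p < e + e'" using rp q(2) c2 by linarith
        then show "p \<in> (\<Union>r\<in>seg_union G. ball r (e + e'))" using rG by auto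
      qed
    next
      show "\<forall>s\<in>G. slope_gt m s \<and> seg_len s > \<bar>\<eta>\<bar>"
      proof
        fix s' assume "s' \<in> G"
        then obtain s and z :: int where s: "s \<in> \<Gamma>"
          and se: "s' = (J \<eta> \<xi> (Pt s (real_of_int z / (2*real \<xi>))), J \<eta> \<xi> (Pt s ((real_of_int z + 1) / (2*real \<xi>))))"
          unfolding G_def by auto
        have k: "\<bar>sl s\<bar> < M" using HG[OF s] unfolding slope_lt_def sl_def by (auto split: prod.splits)
        show "slope_gt m s' \<and> seg_len s' > \<bar>\<eta>\<bar>"
          unfolding se using piece_props[OF xi1 k c3 c4] by blast
      qed
    qed
  qed
qed

end
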